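(* In algorithm StochKnap with parameter $C>1$, suppose the critical scale satisfies $\kappa>1$. Then for every subset $O\subseteq N$ with $c(O)\le B$, we have $\sum_{i\in S\setminus O}r_\kappa(i)\ge\frac{\epsilon(C-1)}{2}$, where $S=S_\kappa$ is the output.
   Context: Algorithm StochKnap$(N,c,R,B,\epsilon)$ with parameter $C>0$: $N$ is a finite set of items, item $i$ has cost $c(i)>0$ and a nonnegative random reward $R(i)$, rewards independent; $W\ge1$ is an integer with $\sum_{i\in N}\mathbb E[R(i)]\le W$; $B>0$, $\epsilon\in(0,1)$. Let $T=\{i\in N: c(i)\le B\}$ and $D=CB$. For $\tau>0$ let $r_\tau(i)=\mathbb E[\min\{R(i)/\tau,1\}]$. Order $T$ as $i_1,i_2,\ldots$ with $r_\tau(i_j)/c(i_j)$ nonincreasing. If $c(T)\ge D$, let $t$ be the smallest index with $\sum_{j\le t}c(i_j)\ge D$, set $S_\tau=\{i_1,\ldots,i_t\}$ and slope $s_\tau=r_\tau(i_t)/c(i_t)$; otherwise $S_\tau=T$, $s_\tau=0$. Scale $\tau$ is rich if $s_\tau>\epsilon/B$, poor otherwise. Scales $\mathcal G=\{2^\ell:\ell\in\mathbb Z,0\le\ell\le\lceil\log_2W\rceil\}$; critical scale $\kappa$ = smallest poor scale in $\mathcal G$ (assumed to exist); output $S=S_\kappa$. *)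

theory Defs
  imports "HOL-Probability.Probability"
begin

definition rtrunc :: "'b measure \<Rightarrow> ('a \<Rightarrow> 'b \<Rightarrow> real) \<Rightarrow> real \<Rightarrow> 'a \<Rightarrow> real" where
  "rtrunc M R \<tau> i = (\<integral>\<omega>. min (R i \<omega> / \<tau>) 1 \<partial>M)"

definition small_items :: "'a set \<Rightarrow> ('a \<Rightarrow> real) \<Rightarrow> real \<Rightarrow> 'a set" where
  "small_items N c B = {i \<in> N. c i \<le> B}"

definition ratio_order :: "'a set \<Rightarrow> ('a \<Rightarrow> real) \<Rightarrow> ('a \<Rightarrow> real) \<Rightarrow> (nat \<Rightarrow> 'a) \<Rightarrow> bool" where
  "ratio_order T c r \<sigma> \<longleftrightarrow> bij_betw \<sigma> {..<card T} T \<and>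
     (\<forall>j k. j \<le> k \<and> k < card T \<longrightarrow> r (\<sigma> k) / c (\<sigma> k) \<le> r (\<sigma> j) / c (\<sigma> j))"

definition cut_index :: "('a \<Rightarrow> real) \<Rightarrow> real \<Rightarrow> (nat \<Rightarrow> 'a) \<Rightarrow> nat" where
  "cut_index c D \<sigma> = (LEAST t. D \<le> (\<Sum>j\<le>t. c (\<sigma> j)))"

definition greedy_set :: "'a set \<Rightarrow> ('a \<Rightarrow> real) \<Rightarrow> real \<Rightarrow> (nat \<Rightarrow> 'a) \<Rightarrow> 'a set" where
  "greedy_set T c D \<sigma> = (if D \<le> sum c T then \<sigma> ` {..cut_index c D \<sigma>} else T)"

definition greedy_slope :: "'a set \<Rightarrow> ('a \<Rightarrow> real) \<Rightarrow> ('a \<Rightarrow> real) \<Rightarrow> real \<Rightarrow> (nat \<Rightarrow> 'a) \<Rightarrow> real" where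
  "greedy_slope T c r D \<sigma> =
     (if D \<le> sum c T then r (\<sigma> (cut_index c D \<sigma>)) / c (\<sigma> (cut_index c D \<sigma>)) else 0)"

definition scales :: "nat \<Rightarrow> real set" where
  "scales W = (\<lambda>l::nat. (2::real) ^ l) ` {0..nat \<lceil>log 2 (real W)\<rceil>}"

end

theory Submission
  imports Defs
begin

lemma greedy_props:
  fixes T :: "'a set" and c r :: "'a \<Rightarrow> real" and \<sigma> :: "nat \<Rightarrow> 'a"
  assumes finT: "finite T" and cpos: "\<forall>i\<in>T. c i > 0"
    and ro: "ratio_order T c r \<sigma>" and Dpos: "0 < D" and DT: "D \<le> sum c T"
  shows "cut_index c D \<sigma> < card T"
    and "D \<le> sum c (\<sigma> ` {..cut_index c D \<sigma>})"
    and "\<sigma> ` {..cut_index c D \<sigma>} \<subseteq> T"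
    and "\<forall>j\<le>cut_index c D \<sigma>. r (\<sigma> (cut_index c D \<sigma>)) / c (\<sigma> (cut_index c D \<sigma>)) \<le> r (\<sigma> j) / c (\<sigma> j)"
    and "\<forall>i\<in>T. r i / c i > r (\<sigma> (cut_index c D \<sigma>)) / c (\<sigma> (cut_index c D \<sigma>)) \<longrightarrow> i \<in> \<sigma> ` {..cut_index c D \<sigma>}"
proof -
  define n where "n = card T"
  define t where "t = cut_index c D \<sigma>"
  have bij: "bij_betw \<sigma> {..<n} T" and mono: "\<And>j k. j \<le> k \<Longrightarrow> k < n \<Longrightarrow> r (\<sigma> k) / c (\<sigma> k) \<le> r (\<sigma> j) / c (\<sigma> j)"
    using ro unfolding ratio_order_def n_def by blast+
  have sT: "sum c T = (\<Sum>j<n. c (\<sigma> j))"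
    using sum.reindex_bij_betw[OF bij, of c] by simp
  have n0: "n > 0" proof (rule ccontr)
    assume "\<not> n > 0" then have "n = 0" by simp
    then show False using sT DT Dpos by simp
  qed
  have eqs: "{..<n} = {..n-1}" using n0 by auto
  have Dn: "D \<le> (\<Sum>j\<le>n-1. c (\<sigma> j))" using sT DT eqs by simp
  have tle: "t \<le> n - 1" unfolding t_def cut_index_def using Dn by (rule Least_le)
  have Dt: "D \<le> (\<Sum>j\<le>t. c (\<sigma> j))" unfolding t_def cut_index_def using Dn by (rule LeastI)
  have tn: "t < n" using tle n0 by simp
  have sub: "{..t} \<subseteq> {..<n}" using tn by auto
  have inj: "inj_on \<sigma> {..t}" using bij_betw_imp_inj_on[OF bij] inj_on_subset sub by blast
  show "cut_index c D \<sigma> < card T" using tn t_def n_def by simp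
  show "D \<le> sum c (\<sigma> ` {..cut_index c D \<sigma>})"
    using Dt sum.reindex[OF inj, of c] t_def by simp
  show "\<sigma> ` {..cut_index c D \<sigma>} \<subseteq> T"
    using bij_betw_imp_surj_on[OF bij] sub t_def by auto
  show "\<forall>j\<le>cut_index c D \<sigma>. r (\<sigma> (cut_index c D \<sigma>)) / c (\<sigma> (cut_index c D \<sigma>)) \<le> r (\<sigma> j) / c (\<sigma> j)"
    using mono tn t_def by auto
  show "\<forall>i\<in>T. r i / c i > r (\<sigma> (cut_index c D \<sigma>)) / c (\<sigma> (cut_index c D \<sigma>)) \<longrightarrow> i \<in> \<sigma> ` {..cut_index c D \<sigma>}"
  proof (intro ballI impI)
    fix i assume iT: "i \<in> T" and gt: "r i / c i > r (\<sigma> (cut_index c D \<sigma>)) / c (\<sigma> (cut_index c D \<sigma>))"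
    obtain k where k: "k < n" "\<sigma> k = i" using bij_betw_imp_surj_on[OF bij] iT by force
    have "k \<le> t" proof (rule ccontr)
      assume "\<not> k \<le> t"
      then have "r (\<sigma> k) / c (\<sigma> k) \<le> r (\<sigma> t) / c (\<sigma> t)" using mono[of t k] k by simp
      then show False using gt k t_def by simp
    qed
    then show "i \<in> \<sigma> ` {..cut_index c D \<sigma>}" using k t_def by auto
  qed
qed

lemma final_bound:
  fixes r c :: "'a \<Rightarrow> real"
  assumes finS: "finite S" and XS: "X \<subseteq> S" and rnn: "\<forall>i\<in>S. r i \<ge> 0"
    and finO: "finite Q" and cnn: "\<forall>i\<in>Q. c i \<ge> 0" and cO: "sum c Q \<le> B"
    and cX: "D \<le> sum c X" and e: "e \<ge> 0" and rX: "\<forall>i\<in>X. r i \<ge> e * c i"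
  shows "(\<Sum>i\<in>S - Q. r i) \<ge> e * (D - B)"
proof -
  have finX: "finite X" using finS XS finite_subset by blast
  have "(\<Sum>i\<in>X - Q. r i) \<le> (\<Sum>i\<in>S - Q. r i)"
    by (rule sum_mono2) (use finS XS rnn in auto)
  moreover have "(\<Sum>i\<in>X - Q. e * c i) \<le> (\<Sum>i\<in>X - Q. r i)"
    by (rule sum_mono) (use rX in auto)
  moreover have "sum c (X \<inter> Q) \<le> sum c Q"
    by (rule sum_mono2) (use finO cnn in auto)
  moreover have "sum c X = sum c (X \<inter> Q) + sum c (X - Q)"
    using sum.Int_Diff[OF finX] by blast
  moreover have "(\<Sum>i\<in>X - Q. e * c i) = e * sum c (X - Q)" by (simp add: sum_distrib_left)
  moreover have "e * (D - B) \<le> e * sum c (X - Q)"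
    by (rule mult_left_mono) (use calculation cX cO e in linarith)+
  ultimately show ?thesis by linarith
qed

theorem mainTheorem9:
  fixes N :: "'a set" and c :: "'a \<Rightarrow> real"
    and M :: "'b measure" and R :: "'a \<Rightarrow> 'b \<Rightarrow> real"
    and W :: nat and B \<epsilon> C :: real
    and ord :: "real \<Rightarrow> nat \<Rightarrow> 'a"
    and \<kappa> :: real
  assumes finN: "finite N"
    and cpos: "\<forall>i\<in>N. c i > 0"
    and prob: "prob_space M"
    and Rmeas: "\<forall>i\<in>N. R i \<in> borel_measurable M"
    and Rnonneg: "\<forall>i\<in>N. \<forall>\<omega>\<in>space M. R i \<omega> \<ge> 0"
    and Rint: "\<forall>i\<in>N. integrable M (R i)"
    and Rindep: "prob_space.indep_vars M (\<lambda>_. borel) R N"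
    and W1: "W \<ge> 1"
    and Wbound: "(\<Sum>i\<in>N. (\<integral>\<omega>. R i \<omega> \<partial>M)) \<le> real W"
    and Bpos: "B > 0"
    and eps: "0 < \<epsilon>" "\<epsilon> < 1"
    and C1: "C > 1"
    and order: "\<forall>\<tau>\<in>scales W. ratio_order (small_items N c B) c (rtrunc M R \<tau>) (ord \<tau>)"
    and kappa_scale: "\<kappa> \<in> scales W"
    and kappa_poor: "greedy_slope (small_items N c B) c (rtrunc M R \<kappa>) (C * B) (ord \<kappa>) \<le> \<epsilon> / B"
    and below_rich: "\<forall>\<tau>\<in>scales W. \<tau> < \<kappa> \<longrightarrow>
        greedy_slope (small_items N c B) c (rtrunc M R \<tau>) (C * B) (ord \<tau>) > \<epsilon> / B"
    and kappa_gt1: "\<kappa> > 1"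
  shows "\<forall>Opt. Opt \<subseteq> N \<and> sum c Opt \<le> B \<longrightarrow>
    (\<Sum>i\<in>(greedy_set (small_items N c B) c (C * B) (ord \<kappa>) - Opt). rtrunc M R \<kappa> i)
      \<ge> \<epsilon> * (C - 1) / 2"
proof -
  define T where "T = small_items N c B"
  define D where "D = C * B"
  have TN: "T \<subseteq> N" unfolding T_def small_items_def by auto
  have finT: "finite T" using finN TN finite_subset by blast
  have cT: "\<forall>i\<in>T. c i > 0" using cpos TN by auto
  have Dpos: "0 < D" unfolding D_def using C1 Bpos by simp
  obtain l where l: "l \<le> nat \<lceil>log 2 (real W)\<rceil>" "\<kappa> = 2 ^ l"
    using kappa_scale unfolding scales_def by auto
  have l0: "l \<noteq> 0" using l kappa_gt1 by (metis less_irrefl power_0)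
  define \<kappa>' where "\<kappa>' = (2::real) ^ (l - 1)"
  have kk: "\<kappa> = 2 * \<kappa>'" unfolding \<kappa>'_def using l l0
    by (metis One_nat_def Suc_pred neq0_conv power_Suc)
  have k'pos: "\<kappa>' > 0" unfolding \<kappa>'_def by simp
  have k'sc: "\<kappa>' \<in> scales W" unfolding scales_def \<kappa>'_def using l by auto
  have k'lt: "\<kappa>' < \<kappa>" using kk k'pos by simp
  define r where "r = rtrunc M R \<kappa>"
  define r' where "r' = rtrunc M R \<kappa>'"
  have rich: "greedy_slope T c r' D (ord \<kappa>') > \<epsilon> / B"
    using below_rich k'sc k'lt unfolding T_def r'_def D_def by auto
  have DT: "D \<le> sum c T"
  proof (rule ccontr)
    assume "\<not> D \<le> sum c T"
    then have "greedy_slope T c r' D (ord \<kappa>') = 0" unfolding greedy_slope_def by simp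
    moreover have "\<epsilon> / B > 0" using eps Bpos by simp
    ultimately show False using rich by simp
  qed
  interpret P: prob_space M by (rule prob)
  have integ: "integrable M (\<lambda>\<omega>. min (R i \<omega> / \<tau>) 1)" if "i \<in> N" "\<tau> > 0" for i \<tau>
  proof (rule P.integrable_const_bound[where B=1])
    show "AE x in M. norm (min (R i x / \<tau>) 1) \<le> 1"
      using Rnonneg that by (auto intro!: AE_I2)
    show "(\<lambda>\<omega>. min (R i \<omega> / \<tau>) 1) \<in> borel_measurable M"
      using Rmeas that by (intro borel_measurable_min borel_measurable_divide) auto
  qed
  have rnn: "r i \<ge> 0" if "i \<in> N" for i
    unfolding r_def rtrunc_def
    by (rule integral_nonneg_AE, rule AE_I2) (use Rnonneg that kappa_gt1 in auto)
  have rr': "r i \<ge> r' i / 2" if "i \<in> N" for i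
  proof -
    have "r' i / 2 = (\<integral>\<omega>. min (R i \<omega> / \<kappa>') 1 / 2 \<partial>M)"
      unfolding r'_def rtrunc_def by simp
    also have "\<dots> \<le> (\<integral>\<omega>. min (R i \<omega> / \<kappa>) 1 \<partial>M)"
    proof (rule integral_mono)
      show "integrable M (\<lambda>\<omega>. min (R i \<omega> / \<kappa>') 1 / 2)"
        using integ[OF that k'pos] by simp
      show "integrable M (\<lambda>\<omega>. min (R i \<omega> / \<kappa>) 1)"
        using integ[OF that] kappa_gt1 by simp
      fix x assume "x \<in> space M"
      then have "R i x \<ge> 0" using Rnonneg that by auto
      then show "min (R i x / \<kappa>') 1 / 2 \<le> min (R i x / \<kappa>) 1"
        using kk k'pos by (auto simp: min_def field_simps)
    qed
    finally show ?thesis unfolding r_def rtrunc_def .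
  qed
  define \<sigma> where "\<sigma> = ord \<kappa>"
  define \<sigma>' where "\<sigma>' = ord \<kappa>'"
  have ro: "ratio_order T c r \<sigma>" using order kappa_scale unfolding T_def r_def \<sigma>_def by auto
  have ro': "ratio_order T c r' \<sigma>'" using order k'sc unfolding T_def r'_def \<sigma>'_def by auto
  define t where "t = cut_index c D \<sigma>"
  define t' where "t' = cut_index c D \<sigma>'"
  define S where "S = \<sigma> ` {..t}"
  define S' where "S' = \<sigma>' ` {..t'}"
  note G = greedy_props[OF finT cT ro Dpos DT, folded t_def S_def]
  note G' = greedy_props[OF finT cT ro' Dpos DT, folded t'_def S'_def]
  have gs: "greedy_set (small_items N c B) c (C * B) (ord \<kappa>) = S"
    unfolding S_def t_def \<sigma>_def greedy_set_def using DT T_def D_def by simp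
  have slope': "r' (\<sigma>' t') / c (\<sigma>' t') > \<epsilon> / B"
    using rich DT unfolding greedy_slope_def t'_def \<sigma>'_def by simp
  have finS: "finite S" unfolding S_def by simp
  have SN: "S \<subseteq> N" using G(3) TN by auto
  define e where "e = \<epsilon> / (2 * B)"
  have e0: "e \<ge> 0" unfolding e_def using eps Bpos by simp
  have "\<exists>X. X \<subseteq> S \<and> D \<le> sum c X \<and> (\<forall>i\<in>X. r i \<ge> e * c i)"
  proof (cases "r (\<sigma> t) / c (\<sigma> t) \<ge> e")
    case True
    have "\<forall>i\<in>S. r i \<ge> e * c i"
    proof
      fix i assume "i \<in> S"
      then obtain j where j: "j \<le> t" "i = \<sigma> j" unfolding S_def by auto
      have iT: "i \<in> T" using G(3) \<open>i \<in> S\<close> by auto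
      have "e \<le> r i / c i" using G(4) j True by force
      then show "r i \<ge> e * c i" using cT iT by (simp add: pos_le_divide_eq)
    qed
    then show ?thesis using G(2) by blast
  next
    case False
    have "\<forall>i\<in>S'. r i \<ge> e * c i \<and> i \<in> S"
    proof
      fix i assume iS': "i \<in> S'"
      then obtain j where j: "j \<le> t'" "i = \<sigma>' j" unfolding S'_def by auto
      have iT: "i \<in> T" using G'(3) iS' by auto
      have ci: "c i > 0" using cT iT by auto
      have "\<epsilon> / B < r' i / c i" using G'(4) j slope' by force
      then have "\<epsilon> / B * c i < r' i" using ci by (simp add: pos_less_divide_eq)
      moreover have "r' i / 2 \<le> r i" using rr' iT TN by auto
      ultimately have "\<epsilon> / B * c i < 2 * r i" by linarith
      then have "\<epsilon> * c i / B / 2 < r i" by (simp add: field_simps)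
      then have lt: "e * c i < r i" unfolding e_def by (simp add: field_simps)
      then have "e < r i / c i" using ci by (simp add: pos_less_divide_eq)
      then have "i \<in> S" using G(5) iT False unfolding S_def by auto
      then show "r i \<ge> e * c i \<and> i \<in> S" using lt by simp
    qed
    then show ?thesis using G'(2) by blast
  qed
  then obtain X where X: "X \<subseteq> S" "D \<le> sum c X" "\<forall>i\<in>X. r i \<ge> e * c i" by blast
  show ?thesis
  proof (intro allI impI)
    fix Opt assume O: "Opt \<subseteq> N \<and> sum c Opt \<le> B"
    have finO: "finite Opt" using O finN finite_subset by blast
    have "(\<Sum>i\<in>S - Opt. r i) \<ge> e * (D - B)"
      by (rule final_bound[OF finS X(1) _ finO _ _ X(2) e0 X(3)])
         (use SN rnn O cpos in \<open>auto intro: less_imp_le\<close>)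
    moreover have "e * (D - B) = \<epsilon> * (C - 1) / 2"
      unfolding e_def D_def using Bpos by (simp add: field_simps)
    ultimately show "(\<Sum>i\<in>(greedy_set (small_items N c B) c (C * B) (ord \<kappa>) - Opt). rtrunc M R \<kappa> i)
      \<ge> \<epsilon> * (C - 1) / 2" using gs unfolding r_def by simp
  qed
qed

end
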